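(* Let $X$ be a metrizable vector space over $K$ with metric $d_X$, and let $Y$ be a Banach space over $K$ with $d_Y$ the metric induced by its norm. Then $B_d(X,Y)$ is a Banach space with norm $\|F\|_{B_d(X,Y)}=d(F,0)$.
   Context: $K$ is $\mathbb{R}$ or $\mathbb{C}$. For maps $F_1,F_2:X\to Y$, $d(F_1,F_2)=\max\left\{\sup_{x\neq0,x\in X}\frac{\|F_1(x)-F_2(x)\|_Y}{d_X(x,0)},\ \|F_1(0)-F_2(0)\|_Y\right\}\in[0,\infty]$, and $B_d(X,Y)$ is the set of maps $F:X\to Y$ with $d(F,0)<\infty$, with pointwise vector operations. *)

theory Defs
  imports "HOL-Analysis.Analysis"
begin

text \<open>The scalar field K is represented by a type 'k (real or complex); a vector space
  over K is an additive group with a scalar action satisfying the axioms of the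
  HOL locale Vector_Spaces.vector_space.\<close>

text \<open>The metric d_X is the type's dist.\<close>
definition metrizable_tvs :: "('k::{field,topological_space} \<Rightarrow> 'a::{ab_group_add,metric_space} \<Rightarrow> 'a) \<Rightarrow> bool" where
  "metrizable_tvs sc \<longleftrightarrow> Vector_Spaces.vector_space sc
     \<and> continuous_on UNIV (\<lambda>p::'a \<times> 'a. fst p + snd p)
     \<and> continuous_on UNIV (\<lambda>p::'k \<times> 'a. sc (fst p) (snd p))"

definition banach_over :: "('k::real_normed_field \<Rightarrow> 'b::banach \<Rightarrow> 'b) \<Rightarrow> bool" where
  "banach_over sc \<longleftrightarrow> Vector_Spaces.vector_space sc
     \<and> (\<forall>c y. norm (sc c y) = norm c * norm y)
     \<and> (\<forall>r y. sc (of_real r) y = scaleR r y)"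

definition dB :: "('a::{zero,metric_space} \<Rightarrow> 'b::real_normed_vector) \<Rightarrow> ('a \<Rightarrow> 'b) \<Rightarrow> ennreal" where
  "dB F1 F2 = max (SUP x\<in>{x. x \<noteq> 0}. ennreal (norm (F1 x - F2 x) / dist x 0))
                  (ennreal (norm (F1 0 - F2 0)))"

definition Bd :: "('a::{zero,metric_space} \<Rightarrow> 'b::real_normed_vector) set" where
  "Bd = {F. dB F (\<lambda>_. 0) < \<infinity>}"

definition normBd :: "('a::{zero,metric_space} \<Rightarrow> 'b::real_normed_vector) \<Rightarrow> real" where
  "normBd F = enn2real (dB F (\<lambda>_. 0))"

definition banach_fun_space ::
  "('k::real_normed_field \<Rightarrow> 'b::ab_group_add \<Rightarrow> 'b) \<Rightarrow> ('a \<Rightarrow> 'b) set \<Rightarrow> (('a \<Rightarrow> 'b) \<Rightarrow> real) \<Rightarrow> bool" where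
  "banach_fun_space sc S N \<longleftrightarrow>
     (\<lambda>_. 0) \<in> S
   \<and> (\<forall>F\<in>S. \<forall>G\<in>S. (\<lambda>x. F x + G x) \<in> S)
   \<and> (\<forall>c. \<forall>F\<in>S. (\<lambda>x. sc c (F x)) \<in> S)
   \<and> (\<forall>F\<in>S. 0 \<le> N F \<and> (N F = 0 \<longleftrightarrow> F = (\<lambda>_. 0)))
   \<and> (\<forall>F\<in>S. \<forall>G\<in>S. N (\<lambda>x. F x + G x) \<le> N F + N G)
   \<and> (\<forall>c. \<forall>F\<in>S. N (\<lambda>x. sc c (F x)) = norm c * N F)
   \<and> (\<forall>f :: nat \<Rightarrow> 'a \<Rightarrow> 'b. (\<forall>n. f n \<in> S) \<and>
          (\<forall>e>0. \<exists>M. \<forall>m\<ge>M. \<forall>n\<ge>M. N (\<lambda>x. f m x - f n x) < e)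
        \<longrightarrow> (\<exists>F\<in>S. (\<lambda>n. N (\<lambda>x. f n x - F x)) \<longlonglongrightarrow> 0))"

end

theory Submission
  imports Defs
begin

definition wt :: "'a::{zero,metric_space} \<Rightarrow> real" where
  "wt x = (if x = 0 then 1 else 1 / dist x 0)"

lemma wt_pos: "wt x > 0"
  by (simp add: wt_def)

lemma dB_eq: "dB F G = (SUP x. ennreal (wt x * norm (F x - G x)))"
proof -
  have U: "(UNIV :: 'a set) = insert 0 {x. x \<noteq> 0}" by auto
  have "(SUP x. ennreal (wt x * norm (F x - G x))) =
        sup (ennreal (norm (F 0 - G 0))) (SUP x\<in>{x. x \<noteq> 0}. ennreal (wt x * norm (F x - G x)))"
    by (subst U, subst SUP_insert) (simp add: wt_def)
  also have "(SUP x\<in>{x. x \<noteq> 0}. ennreal (wt x * norm (F x - G x)))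
      = (SUP x\<in>{x. x \<noteq> 0}. ennreal (norm (F x - G x) / dist x 0))"
    by (rule SUP_cong) (auto simp: wt_def)
  finally show ?thesis unfolding dB_def by (simp add: sup_max max.commute)
qed

lemma P1:
  assumes "F \<in> Bd"
  shows "wt x * norm (F x) \<le> normBd F"
proof -
  have fin: "(SUP x. ennreal (wt x * norm (F x))) < \<infinity>"
    using assms unfolding Bd_def by (simp add: dB_eq)
  have "ennreal (wt x * norm (F x)) \<le> (SUP x. ennreal (wt x * norm (F x)))"
    by (rule SUP_upper) auto
  then have "enn2real (ennreal (wt x * norm (F x))) \<le> enn2real (SUP x. ennreal (wt x * norm (F x)))"
    using fin by (intro enn2real_mono) auto
  then show ?thesis using wt_pos[of x] unfolding normBd_def by (simp add: dB_eq)
qed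

lemma P2:
  assumes "\<And>x. wt x * norm (F x) \<le> B"
  shows "F \<in> Bd \<and> normBd F \<le> B"
proof -
  have B0: "0 \<le> B" using assms[of 0] wt_pos[of "0::'a"]
    by (meson mult_nonneg_nonneg norm_ge_zero order.trans less_imp_le)
  have le: "(SUP x. ennreal (wt x * norm (F x))) \<le> ennreal B"
    by (rule SUP_least) (use assms in \<open>auto intro: ennreal_leI\<close>)
  then have fin: "(SUP x. ennreal (wt x * norm (F x))) < \<infinity>"
    using le_less_trans by fastforce
  have "enn2real (SUP x. ennreal (wt x * norm (F x))) \<le> enn2real (ennreal B)"
    using le by (intro enn2real_mono) auto
  then show ?thesis using fin B0 unfolding normBd_def Bd_def by (simp add: dB_eq)
qed

lemma N_nonneg: "F \<in> Bd \<Longrightarrow> 0 \<le> normBd F"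
  using P1[of F 0] wt_pos[of "0::'a"]
  by (meson mult_nonneg_nonneg norm_ge_zero order.trans less_imp_le)

lemma main:
  fixes sc :: "'k::real_normed_field \<Rightarrow> 'b::banach \<Rightarrow> 'b"
  assumes hom: "\<forall>c y. norm (sc c y) = norm c * norm y"
  shows "banach_fun_space sc (Bd :: ('a::{zero,metric_space} \<Rightarrow> 'b) set) normBd"
proof -
  have z: "(\<lambda>_. 0) \<in> (Bd :: ('a \<Rightarrow> 'b) set) \<and> normBd (\<lambda>_::'a. 0::'b) \<le> 0"
    by (rule P2) simp
  have add: "(\<lambda>x. F x + G x) \<in> Bd \<and> normBd (\<lambda>x. F x + G x) \<le> normBd F + normBd G"
    if "F \<in> Bd" "G \<in> Bd" for F G :: "'a \<Rightarrow> 'b"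
  proof (rule P2)
    fix x
    have "wt x * norm (F x + G x) \<le> wt x * norm (F x) + wt x * norm (G x)"
      using wt_pos[of x] norm_triangle_ineq[of "F x" "G x"]
      by (simp add: distrib_left[symmetric])
    also have "\<dots> \<le> normBd F + normBd G" using P1[OF that(1)] P1[OF that(2)] by (intro add_mono)
    finally show "wt x * norm (F x + G x) \<le> normBd F + normBd G" .
  qed
  have smul: "(\<lambda>x. sc c (F x)) \<in> Bd \<and> normBd (\<lambda>x. sc c (F x)) = norm c * normBd F"
    if F: "F \<in> Bd" for F :: "'a \<Rightarrow> 'b" and c
  proof -
    have 1: "(\<lambda>x. sc c (F x)) \<in> Bd \<and> normBd (\<lambda>x. sc c (F x)) \<le> norm c * normBd F"
    proof (rule P2)
      fix x
      have "wt x * norm (sc c (F x)) = norm c * (wt x * norm (F x))" using hom by simp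
      also have "\<dots> \<le> norm c * normBd F" using P1[OF F] by (intro mult_left_mono) auto
      finally show "wt x * norm (sc c (F x)) \<le> norm c * normBd F" .
    qed
    show ?thesis
    proof (cases "c = 0")
      case True
      then show ?thesis using 1 N_nonneg[of "\<lambda>x. sc c (F x)"] by simp
    next
      case False
      then have nc: "norm c > 0" by simp
      have "F \<in> Bd \<and> normBd F \<le> normBd (\<lambda>x. sc c (F x)) / norm c"
      proof (rule P2)
        fix x
        have "norm c * (wt x * norm (F x)) \<le> normBd (\<lambda>x. sc c (F x))"
          using P1[OF 1[THEN conjunct1], of x] hom by (simp add: mult_ac)
        then show "wt x * norm (F x) \<le> normBd (\<lambda>x. sc c (F x)) / norm c"
          using nc by (simp add: field_simps)
      qed
      then have "norm c * normBd F \<le> normBd (\<lambda>x. sc c (F x))"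
        using nc by (simp add: field_simps)
      then show ?thesis using 1 by simp
    qed
  qed
  have diffBd: "(\<lambda>x. F x - G x) \<in> Bd" if "F \<in> Bd" "G \<in> Bd" for F G :: "'a \<Rightarrow> 'b"
  proof -
    have "(\<lambda>x. F x - G x) \<in> Bd \<and> normBd (\<lambda>x. F x - G x) \<le> normBd F + normBd G"
    proof (rule P2)
      fix x
      have "wt x * norm (F x - G x) \<le> wt x * norm (F x) + wt x * norm (G x)"
        using wt_pos[of x] norm_triangle_ineq4[of "F x" "G x"]
        by (simp add: distrib_left[symmetric])
      also have "\<dots> \<le> normBd F + normBd G" using P1[OF that(1)] P1[OF that(2)] by (intro add_mono)
      finally show "wt x * norm (F x - G x) \<le> normBd F + normBd G" .
    qed
    then show ?thesis by simp
  qed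
  have compl: "\<exists>F\<in>Bd. (\<lambda>n. normBd (\<lambda>x. f n x - F x)) \<longlonglongrightarrow> 0"
    if fB: "\<forall>n. f n \<in> Bd" and cau: "\<forall>e>0. \<exists>M. \<forall>m\<ge>M. \<forall>n\<ge>M. normBd (\<lambda>x. f m x - f n x) < e"
    for f :: "nat \<Rightarrow> 'a \<Rightarrow> 'b"
  proof -
    have pt: "wt x * norm (f m x - f n x) \<le> normBd (\<lambda>x. f m x - f n x)" for m n x
      using P1[OF diffBd[OF fB[rule_format, of m] fB[rule_format, of n]]] by simp
    have cx: "Cauchy (\<lambda>n. f n x)" for x
    proof (rule metric_CauchyI)
      fix e :: real assume e: "e > 0"
      obtain M where M: "\<forall>m\<ge>M. \<forall>n\<ge>M. normBd (\<lambda>x. f m x - f n x) < wt x * e"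
        using cau wt_pos[of x] e by (meson mult_pos_pos)
      show "\<exists>M. \<forall>m\<ge>M. \<forall>n\<ge>M. dist (f m x) (f n x) < e"
      proof (intro exI allI impI)
        fix m n assume "m \<ge> M" "n \<ge> M"
        then have "wt x * norm (f m x - f n x) < wt x * e" using M pt[where m=m and n=n and x=x] by fastforce
        then show "dist (f m x) (f n x) < e" using wt_pos[of x] by (simp add: dist_norm)
      qed
    qed
    define F where "F x = lim (\<lambda>n. f n x)" for x
    have lim: "(\<lambda>n. f n x) \<longlonglongrightarrow> F x" for x
      unfolding F_def using cx[of x] by (simp add: Cauchy_convergent_iff convergent_LIMSEQ_iff)
    have bnd: "\<exists>M. \<forall>n\<ge>M. (\<lambda>x. f n x - F x) \<in> Bd \<and> normBd (\<lambda>x. f n x - F x) \<le> e"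
      if e: "e > 0" for e
    proof -
      obtain M where M: "\<forall>m\<ge>M. \<forall>n\<ge>M. normBd (\<lambda>x. f m x - f n x) < e"
        using cau e by blast
      show ?thesis
      proof (intro exI allI impI)
        fix n assume n: "n \<ge> M"
        show "(\<lambda>x. f n x - F x) \<in> Bd \<and> normBd (\<lambda>x. f n x - F x) \<le> e"
        proof (rule P2)
          fix x
          have "(\<lambda>m. wt x * norm (f n x - f m x)) \<longlonglongrightarrow> wt x * norm (f n x - F x)"
            by (intro tendsto_intros lim)
          moreover have "\<forall>\<^sub>F m in sequentially. wt x * norm (f n x - f m x) \<le> e"
            using eventually_ge_at_top[of M]
          proof eventually_elim
            case (elim m)
            then show ?case using M n pt[where m=n and n=m and x=x] by fastforce
          qed
          ultimately show "wt x * norm (f n x - F x) \<le> e"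
            by (rule tendsto_upperbound) simp
        qed
      qed
    qed
    obtain M1 where M1: "\<forall>n\<ge>M1. (\<lambda>x. f n x - F x) \<in> Bd \<and> normBd (\<lambda>x. f n x - F x) \<le> 1"
      using bnd[of 1] by auto
    have FB: "F \<in> Bd"
    proof -
      have "F \<in> Bd \<and> normBd F \<le> 1 + normBd (f M1)"
      proof (rule P2)
        fix x
        have "wt x * norm (F x) \<le> wt x * norm (f M1 x - F x) + wt x * norm (f M1 x)"
          using wt_pos[of x] norm_triangle_ineq3[of "F x" "f M1 x"]
          by (simp add: distrib_left[symmetric] norm_minus_commute)
        also have "\<dots> \<le> 1 + normBd (f M1)"
          using P1[OF M1[rule_format, of M1, THEN conjunct1], of x] M1[rule_format, of M1]
            P1[OF fB[rule_format, of M1], of x] by (intro add_mono) auto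
        finally show "wt x * norm (F x) \<le> 1 + normBd (f M1)" .
      qed
      then show ?thesis by simp
    qed
    have "(\<lambda>n. normBd (\<lambda>x. f n x - F x)) \<longlonglongrightarrow> 0"
    proof (rule LIMSEQ_I)
      fix r :: real assume r: "r > 0"
      obtain M where M: "\<forall>n\<ge>M. (\<lambda>x. f n x - F x) \<in> Bd \<and> normBd (\<lambda>x. f n x - F x) \<le> r / 2"
        using bnd[of "r/2"] r by auto
      show "\<exists>no. \<forall>n\<ge>no. norm (normBd (\<lambda>x. f n x - F x) - 0) < r"
      proof (intro exI allI impI)
        fix n assume "n \<ge> M"
        then show "norm (normBd (\<lambda>x. f n x - F x) - 0) < r"
          using M N_nonneg[of "\<lambda>x. f n x - F x"] r by fastforce
      qed
    qed
    then show ?thesis using FB by blast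
  qed
  show ?thesis
    unfolding banach_fun_space_def
  proof (intro conjI ballI allI impI)
    show "(\<lambda>_. 0) \<in> (Bd :: ('a \<Rightarrow> 'b) set)" using z by blast
  next
    fix F G :: "'a \<Rightarrow> 'b" assume "F \<in> Bd" "G \<in> Bd"
    then show "(\<lambda>x. F x + G x) \<in> Bd" "normBd (\<lambda>x. F x + G x) \<le> normBd F + normBd G"
      using add by blast+
  next
    fix c and F :: "'a \<Rightarrow> 'b" assume "F \<in> Bd"
    then show "(\<lambda>x. sc c (F x)) \<in> Bd" "normBd (\<lambda>x. sc c (F x)) = norm c * normBd F"
      using smul by blast+
  next
    fix F :: "'a \<Rightarrow> 'b" assume F: "F \<in> Bd"
    show "0 \<le> normBd F" using N_nonneg[OF F] .
    show "normBd F = 0 \<longleftrightarrow> F = (\<lambda>_. 0)"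
    proof
      assume "normBd F = 0"
      then have "wt x * norm (F x) \<le> 0" for x using P1[OF F, of x] by simp
      then have "F x = 0" for x using wt_pos[of x]
        by (metis mult_pos_pos zero_less_norm_iff not_le)
      then show "F = (\<lambda>_. 0)" by blast
    next
      assume "F = (\<lambda>_. 0)"
      then show "normBd F = 0" using z N_nonneg[OF F] by simp
    qed
  next
    fix f :: "nat \<Rightarrow> 'a \<Rightarrow> 'b"
    assume "(\<forall>n. f n \<in> Bd) \<and> (\<forall>e>0. \<exists>M. \<forall>m\<ge>M. \<forall>n\<ge>M. normBd (\<lambda>x. f m x - f n x) < e)"
    then show "\<exists>F\<in>Bd. (\<lambda>n. normBd (\<lambda>x. f n x - F x)) \<longlonglongrightarrow> 0"
      using compl by blast
  qed
qed

theorem corollary11: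
  fixes scXR :: "real \<Rightarrow> 'a::{ab_group_add,metric_space} \<Rightarrow> 'a"
    and scYR :: "real \<Rightarrow> 'b::banach \<Rightarrow> 'b"
    and scXC :: "complex \<Rightarrow> 'c::{ab_group_add,metric_space} \<Rightarrow> 'c"
    and scYC :: "complex \<Rightarrow> 'd::banach \<Rightarrow> 'd"
  shows "(metrizable_tvs scXR \<and> banach_over scYR \<longrightarrow>
            banach_fun_space scYR (Bd :: ('a \<Rightarrow> 'b) set) normBd)
       \<and> (metrizable_tvs scXC \<and> banach_over scYC \<longrightarrow>
            banach_fun_space scYC (Bd :: ('c \<Rightarrow> 'd) set) normBd)"
  by (intro conjI impI main) (auto simp: banach_over_def)

end
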